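(* Let $T$ be an $spo$-tableau and $x_1,x_2\in B_0$ with $x_1\le x_2$. Suppose the insertion of $x_1$ into $T$ causes a cancellation and the insertion of $x_2$ into $U=T\leftarrow x_1$ causes a cancellation. Then the box removed from the shape of $U$ in forming $U\leftarrow x_2$ lies in a different column from the box removed from the shape of $T$ in forming $U$.
   Context: Fix positive integers $m,n$. Let $B_0=\{1,\bar1,2,\bar2,\dots,m,\bar m\}$, $B_1=\{1^\circ,\dots,n^\circ\}$, $B=B_0\cup B_1$, totally ordered by $1<\bar1<2<\bar2<\cdots<m<\bar m<1^\circ<\cdots<n^\circ$. Rows are numbered from the top starting at 1, columns from the left. An $spo$-tableau of shape $\lambda$ is a filling of the Young diagram of $\lambda$ with entries of $B$ such that (i) the boxes containing entries of $B_0$ form a Young diagram $\sigma\subseteq\lambda$, and this part is weakly increasing along rows, strictly increasing down columns, and every entry in row $i$ is $\ge i$; (ii) the entries of $B_1$ (filling $\lambda/\sigma$) are strictly increasing along rows and weakly increasing down columns. $spo$-insertion: a forward jeu de taquin slide on an empty box with right neighbour $a$ and lower neighbour $b$ moves $a$ left into the empty box if $a<b$ or ($a=b\in B_1$), and moves $b$ up into the empty box if $b<a$ or ($a=b\in B_0$); if only one neighbour exists it moves in; slides are repeated until the empty box has no right or lower neighbour, and then that box is deleted. Inserting $z\in B_0$ into row $r$: if no entry of the row exceeds $z$, append $z$ in a new box at the end of the row; otherwise let $w$ be the least entry of the row with $w>z$; if $z=r$ (unbarred) and $w=\bar r$, delete $\bar r$ leaving an empty box (a cancellation); otherwise replace $w$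 by $z$, displacing $w$. Inserting $z\in B_1$ into column $c$: if no entry of the column exceeds $z$, append $z$ in a new box at the bottom; otherwise replace the least entry $w>z$ of the column by $z$, displacing $w$. To insert $x\in B_0$ into $T$ (result $T\leftarrow x$) start by inserting $x$ into row 1; to insert $x\in B_1$ (result $x\rightarrow T$) start by inserting $x$ into column 1. Whenever an entry $w$ is displaced from a box in row $r$, column $c$: if $w\in B_0$ insert it into row $r+1$; if $w\in B_1$ insert it into column $c+1$. The process ends when an entry is placed in a new box, or when a cancellation occurs, in which case the empty box is moved to an outer corner by forward slides and deleted. If no cancellation occurs the result has exactly one new box; if a cancellation occurs the result has exactly one box fewer. *)

theory Defs
  imports Main "HOL-Library.Product_Lexorder"
begin

text \<open>B0 i False is the unbarred letter i, B0 i True is the barred letter (bar i),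
  B1 j is the circled letter (j circ).\<close>
datatype ent = B0 nat bool | B1 nat

fun ent_key :: "ent \<Rightarrow> nat \<times> nat" where
  "ent_key (B0 i b) = (0, 2 * i + (if b then 1 else 0))"
| "ent_key (B1 j) = (1, j)"

lemma ent_key_inj: "inj ent_key"
proof (rule injI)
  fix x y assume "ent_key x = ent_key y"
  then show "x = y"
    by (cases x; cases y) (auto split: if_splits, presburger+)
qed

instantiation ent :: linorder
begin
definition less_eq_ent :: "ent \<Rightarrow> ent \<Rightarrow> bool" where
  "less_eq_ent x y \<longleftrightarrow> ent_key x \<le> ent_key y"
definition less_ent :: "ent \<Rightarrow> ent \<Rightarrow> bool" where
  "less_ent x y \<longleftrightarrow> ent_key x < ent_key y"
instance
proof
  fix x y z :: ent
  show "(x < y) = (x \<le> y \<and> \<not> y \<le> x)" by (auto simp: less_eq_ent_def less_ent_def)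
  show "x \<le> x" by (simp add: less_eq_ent_def)
  show "x \<le> y \<Longrightarrow> y \<le> z \<Longrightarrow> x \<le> z" by (auto simp: less_eq_ent_def)
  show "x \<le> y \<Longrightarrow> y \<le> x \<Longrightarrow> x = y"
    using ent_key_inj by (auto simp: less_eq_ent_def inj_eq)
  show "x \<le> y \<or> y \<le> x" by (auto simp: less_eq_ent_def)
qed
end

fun is_B0 :: "ent \<Rightarrow> bool" where
  "is_B0 (B0 _ _) = True" | "is_B0 (B1 _) = False"

fun in_B :: "nat \<Rightarrow> nat \<Rightarrow> ent \<Rightarrow> bool" where
  "in_B m n (B0 i b) \<longleftrightarrow> 1 \<le> i \<and> i \<le> m"
| "in_B m n (B1 j) \<longleftrightarrow> 1 \<le> j \<and> j \<le> n"

text \<open>A filling: box (row, column), both 1-indexed, rows numbered from the top.\<close>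
type_synonym tab = "nat \<times> nat \<Rightarrow> ent option"

definition young_diagram :: "(nat \<times> nat) set \<Rightarrow> bool" where
  "young_diagram D \<longleftrightarrow> finite D \<and> (\<forall>(i,j)\<in>D. 1 \<le> i \<and> 1 \<le> j) \<and>
     (\<forall>i j i' j'. (i,j) \<in> D \<and> 1 \<le> i' \<and> i' \<le> i \<and> 1 \<le> j' \<and> j' \<le> j \<longrightarrow> (i',j') \<in> D)"

definition spo_tableau :: "nat \<Rightarrow> nat \<Rightarrow> tab \<Rightarrow> bool" where
  "spo_tableau m n T \<longleftrightarrow>
     young_diagram (dom T) \<and>
     (\<forall>p w. T p = Some w \<longrightarrow> in_B m n w) \<and>
     young_diagram {p. \<exists>w. T p = Some w \<and> is_B0 w} \<and>
     \<comment> \<open>B0 part: weakly increasing along rows, strictly down columns, row-i entries \<ge> i\<close>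
     (\<forall>i j a b. T (i,j) = Some a \<and> T (i,j+1) = Some b \<and> is_B0 a \<and> is_B0 b \<longrightarrow> a \<le> b) \<and>
     (\<forall>i j a b. T (i,j) = Some a \<and> T (i+1,j) = Some b \<and> is_B0 a \<and> is_B0 b \<longrightarrow> a < b) \<and>
     (\<forall>i j a. T (i,j) = Some a \<and> is_B0 a \<longrightarrow> B0 i False \<le> a) \<and>
     \<comment> \<open>B1 part: strictly increasing along rows, weakly down columns\<close>
     (\<forall>i j a b. T (i,j) = Some a \<and> T (i,j+1) = Some b \<and> \<not> is_B0 a \<and> \<not> is_B0 b \<longrightarrow> a < b) \<and>
     (\<forall>i j a b. T (i,j) = Some a \<and> T (i+1,j) = Some b \<and> \<not> is_B0 a \<and> \<not> is_B0 b \<longrightarrow> a \<le> b)"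

text \<open>States: insert an entry into a row / into a column; a hole (empty box)
  being moved by forward slides; finished, with the deleted box (Some p) in
  case a cancellation occurred, or None otherwise.\<close>
datatype ins_state =
    RowIns tab ent nat
  | ColIns tab ent nat
  | Slide tab "nat \<times> nat"
  | Done tab "(nat \<times> nat) option"

definition displace :: "tab \<Rightarrow> ent \<Rightarrow> nat \<Rightarrow> nat \<Rightarrow> ins_state" where
  "displace T w r c = (if is_B0 w then RowIns T w (r+1) else ColIns T w (c+1))"

definition move_into :: "tab \<Rightarrow> nat \<times> nat \<Rightarrow> nat \<times> nat \<Rightarrow> ent \<Rightarrow> ins_state" where
  "move_into T hole q a = Slide (T(hole := Some a, q := None)) q"

fun ins_step :: "ins_state \<Rightarrow> ins_state" where
  "ins_step (RowIns T z r) =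
     (if \<not> (\<exists>c w. T (r,c) = Some w \<and> z < w)
      then Done (T((r, Max ({0} \<union> {c. (r,c) \<in> dom T}) + 1) := Some z)) None
      else (let w = Min {w. \<exists>c. T (r,c) = Some w \<and> z < w};
                c = Min {c. T (r,c) = Some w} in
            if z = B0 r False \<and> w = B0 r True
            then Slide (T((r,c) := None)) (r,c)
            else displace (T((r,c) := Some z)) w r c))"
| "ins_step (ColIns T z c) =
     (if \<not> (\<exists>r w. T (r,c) = Some w \<and> z < w)
      then Done (T((Max ({0} \<union> {r. (r,c) \<in> dom T}) + 1, c) := Some z)) None
      else (let w = Min {w. \<exists>r. T (r,c) = Some w \<and> z < w};
                r = Min {r. T (r,c) = Some w} in
            displace (T((r,c) := Some z)) w r c))"
| "ins_step (Slide T (i,j)) =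
     (case (T (i,j+1), T (i+1,j)) of
        (None, None) \<Rightarrow> Done T (Some (i,j))
      | (Some a, None) \<Rightarrow> move_into T (i,j) (i,j+1) a
      | (None, Some b) \<Rightarrow> move_into T (i,j) (i+1,j) b
      | (Some a, Some b) \<Rightarrow>
          (if a < b \<or> (a = b \<and> \<not> is_B0 a)
           then move_into T (i,j) (i,j+1) a
           else move_into T (i,j) (i+1,j) b))"
| "ins_step (Done T d) = Done T d"

text \<open>spo_row_insert T x U d: the insertion T \<leftarrow> x of x \<in> B0 (starting in row 1)
  terminates with result U; d = Some p iff a cancellation occurred, p being the
  box deleted from the shape of T.\<close>
definition spo_row_insert :: "tab \<Rightarrow> ent \<Rightarrow> tab \<Rightarrow> (nat \<times> nat) option \<Rightarrow> bool" where
  "spo_row_insert T x U d \<longleftrightarrow> (\<exists>k. (ins_step ^^ k) (RowIns T x 1) = Done U d)"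

end

theory Submission
  imports Defs
begin


lemma ent_le_iff: "(x::ent) \<le> y \<longleftrightarrow> ent_key x \<le> ent_key y" by (simp add: less_eq_ent_def)
lemma ent_less_iff: "(x::ent) < y \<longleftrightarrow> ent_key x < ent_key y" by (simp add: less_ent_def)

lemma key_B0_less: "ent_key (B0 i b) < ent_key (B1 j)" by (simp add: less_prod_def)

lemma B0_lt_B1: "B0 i b < B1 j" by (simp add: ent_less_iff less_prod_def)

lemma L1: "B0 k False < y \<Longrightarrow> y \<le> B0 k True \<Longrightarrow> y = B0 k True"
  by (cases y) (auto simp: ent_le_iff ent_less_iff less_eq_prod_def less_prod_def split: if_splits)

lemma L2: "B0 k False \<le> z \<Longrightarrow> z < w \<Longrightarrow> is_B0 w \<Longrightarrow> \<not>(z = B0 k False \<and> w = B0 k True) \<Longrightarrow> B0 (Suc k) False \<le> w"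
  apply (cases z; cases w)
  apply (auto simp: ent_le_iff ent_less_iff less_eq_prod_def less_prod_def split: if_splits)
  by presburger+

lemma L3: "B0 (Suc i) False \<le> a \<or> \<not> is_B0 a \<Longrightarrow> B0 i True < a"
  by (cases a) (auto simp: ent_le_iff ent_less_iff less_eq_prod_def less_prod_def split: if_splits)

lemma L4: "\<not> is_B0 z \<Longrightarrow> z < w \<Longrightarrow> \<not> is_B0 w"
  by (cases z; cases w) (auto simp: ent_le_iff ent_less_iff less_eq_prod_def less_prod_def split: if_splits)

lemma spo_dom: assumes "spo_tableau m n T" "T (i,j) = Some a" shows "1 \<le> i \<and> 1 \<le> j"
proof -
  have "young_diagram (dom T)" using assms(1) unfolding spo_tableau_def by (rule conjunct1)
  then have "\<forall>(i,j)\<in>dom T. 1 \<le> i \<and> 1 \<le> j" unfolding young_diagram_def by blast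
  moreover have "(i,j) \<in> dom T" using assms(2) by blast
  ultimately show ?thesis by blast
qed

lemma spo_young: assumes "spo_tableau m n T" "T (i,j) = Some a" "1 \<le> i'" "i' \<le> i" "1 \<le> j'" "j' \<le> j"
  shows "\<exists>a'. T (i',j') = Some a'"
proof -
  have "(i,j) \<in> dom T" using assms(2) by auto
  moreover have "young_diagram (dom T)" using assms(1) unfolding spo_tableau_def by blast
  ultimately have "(i',j') \<in> dom T" using assms(3-6) unfolding young_diagram_def by blast
  then show ?thesis by auto
qed

lemma spo_B0_left: assumes "spo_tableau m n T" "T (i,Suc j) = Some b" "is_B0 b" "1 \<le> j"
  shows "\<exists>a. T (i,j) = Some a \<and> is_B0 a"
proof -
  let ?D = "{p. \<exists>w. T p = Some w \<and> is_B0 w}"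
  have y: "young_diagram ?D" using assms(1) unfolding spo_tableau_def by blast
  have "(i,Suc j) \<in> ?D" using assms by auto
  moreover have "1 \<le> i" using spo_dom[OF assms(1,2)] by simp
  moreover have "\<forall>i j i' j'. (i,j) \<in> ?D \<and> 1 \<le> i' \<and> i' \<le> i \<and> 1 \<le> j' \<and> j' \<le> j \<longrightarrow> (i',j') \<in> ?D"
    using y unfolding young_diagram_def by (elim conjE) assumption
  ultimately have "(i,j) \<in> ?D" using assms(4) by (meson le_SucI order_refl)
  then show ?thesis by auto
qed

lemma spo_B0B0: "spo_tableau m n T \<Longrightarrow> T (i,j) = Some a \<Longrightarrow> T (i,Suc j) = Some b \<Longrightarrow> is_B0 a \<Longrightarrow> is_B0 b \<Longrightarrow> a \<le> b"
  unfolding spo_tableau_def Suc_eq_plus1 by blast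
lemma spo_B1B1: "spo_tableau m n T \<Longrightarrow> T (i,j) = Some a \<Longrightarrow> T (i,Suc j) = Some b \<Longrightarrow> \<not> is_B0 a \<Longrightarrow> \<not> is_B0 b \<Longrightarrow> a < b"
  unfolding spo_tableau_def Suc_eq_plus1 by blast

lemma spo_row_adj: assumes "spo_tableau m n T" "T (i,j) = Some a" "T (i,Suc j) = Some b"
  shows "a \<le> b \<and> (a = b \<longrightarrow> is_B0 a)"
proof (cases "is_B0 a")
  case True
  show ?thesis
  proof (cases "is_B0 b")
    case True
    then show ?thesis using spo_B0B0[OF assms] \<open>is_B0 a\<close> by simp
  next
    case False
    then show ?thesis using \<open>is_B0 a\<close> by (cases a; cases b) (auto intro: less_imp_le B0_lt_B1)
  qed
next
  case False
  show ?thesis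
  proof (cases "is_B0 b")
    case True
    have "1 \<le> j" using spo_dom[OF assms(1,2)] by simp
    from spo_B0_left[OF assms(1,3) True this] assms(2) False show ?thesis by auto
  next
    case F2: False
    then have "a < b" using spo_B1B1[OF assms] False by simp
    then show ?thesis by auto
  qed
qed

lemma spo_row_mono: assumes "spo_tableau m n T" "T (i,j) = Some a" "T (i,j+d) = Some b"
  shows "a \<le> b"
  using assms(3)
proof (induction d arbitrary: b)
  case 0
  then show ?case using assms(2) by simp
next
  case (Suc d)
  have ij: "1 \<le> i \<and> 1 \<le> j" using spo_dom[OF assms(1,2)] by simp
  obtain c where c: "T (i, j+d) = Some c"
    using spo_young[OF assms(1) Suc.prems, of i "j+d"] ij by auto
  have "a \<le> c" using Suc.IH[OF c] .
  moreover have "c \<le> b" using spo_row_adj[OF assms(1) c] Suc.prems by simp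
  ultimately show ?case by simp
qed

lemma spo_row_mono': assumes "spo_tableau m n T" "T (i,j) = Some a" "T (i,j') = Some b" "j \<le> j'"
  shows "a \<le> b"
  using spo_row_mono[OF assms(1,2), of "j' - j" b] assms(3,4) by simp

lemma spo_row_lb: assumes "spo_tableau m n T" "T (Suc i,j) = Some a" shows "B0 i True < a"
proof -
  have "is_B0 a \<longrightarrow> B0 (Suc i) False \<le> a" using assms unfolding spo_tableau_def by blast
  then show ?thesis by (intro L3) auto
qed

lemma spo_fin: assumes "spo_tableau m n T" shows "finite (dom T)"
proof -
  have "young_diagram (dom T)" using assms unfolding spo_tableau_def by (rule conjunct1)
  then show ?thesis unfolding young_diagram_def by (rule conjunct1)
qed



lemma funpow_Done: "(ins_step^^k) (Done W d) = Done W d"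
  by (induction k) auto

lemma run_Suc: "(ins_step^^Suc N) s = (ins_step^^N) (ins_step s)"
  by (simp add: funpow_Suc_right del: funpow.simps)

lemma fin_vals: "finite (dom W) \<Longrightarrow> finite {w. \<exists>x. W (f x) = Some w \<and> P w}"
  by (rule finite_subset[OF _ finite_ran[of W]]) (auto simp: ran_def)

lemma fin_cols: "finite (dom W) \<Longrightarrow> finite {c. W (r,c) = Some w}"
  by (rule finite_subset[OF _ finite_imageI[of "dom W" snd]]) force+

lemma fin_rows: "finite (dom W) \<Longrightarrow> finite {r. W (r,c) = Some w}"
  by (rule finite_subset[OF _ finite_imageI[of "dom W" fst]]) force+

lemma rowins_exists:
  assumes fin: "finite (dom W)" and ex: "\<exists>c w. W (r,c) = Some w \<and> z < w"
  obtains w c where "W (r,c) = Some w" "z < w" "\<And>c' w'. W (r,c') = Some w' \<Longrightarrow> z < w' \<Longrightarrow> w \<le> w'"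
    "ins_step (RowIns W z r) = (if z = B0 r False \<and> w = B0 r True then Slide (W((r,c) := None)) (r,c)
         else displace (W((r,c) := Some z)) w r c)"
proof -
  define S where "S = {w. \<exists>c. W (r,c) = Some w \<and> z < w}"
  have fS: "finite S" unfolding S_def using fin_vals[OF fin, of "\<lambda>c. (r,c)" "\<lambda>w. z < w"] by simp
  have neS: "S \<noteq> {}" using ex unfolding S_def by auto
  define w where "w = Min S"
  have wS: "w \<in> S" unfolding w_def using Min_in[OF fS neS] .
  define C where "C = {c. W (r,c) = Some w}"
  have fC: "finite C" unfolding C_def using fin_cols[OF fin] .
  have neC: "C \<noteq> {}" using wS unfolding S_def C_def by auto
  define c where "c = Min C"
  have cC: "c \<in> C" unfolding c_def using Min_in[OF fC neC] .
  show ?thesis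
  proof (rule that)
    show "W (r,c) = Some w" using cC unfolding C_def by simp
    show "z < w" using wS \<open>W (r,c) = Some w\<close> unfolding S_def by auto
    show "\<And>c' w'. W (r,c') = Some w' \<Longrightarrow> z < w' \<Longrightarrow> w \<le> w'"
      unfolding w_def by (rule Min_le[OF fS]) (auto simp: S_def)
    show "ins_step (RowIns W z r) = (if z = B0 r False \<and> w = B0 r True then Slide (W((r,c) := None)) (r,c)
         else displace (W((r,c) := Some z)) w r c)"
      apply (subst ins_step.simps)
      apply (simp only: ex not_True_eq_False if_False Let_def S_def[symmetric] w_def[symmetric])
      apply (simp only: C_def[symmetric] c_def[symmetric])
      done
  qed
qed

lemma rowins_none:
  "\<not> (\<exists>c w. W (r,c) = Some w \<and> z < w) \<Longrightarrow> \<exists>U. ins_step (RowIns W z r) = Done U None"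
  by simp

lemma colins_exists:
  assumes fin: "finite (dom W)" and ex: "\<exists>r w. W (r,c) = Some w \<and> z < w"
  obtains w r where "W (r,c) = Some w" "z < w" 
    "ins_step (ColIns W z c) = displace (W((r,c) := Some z)) w r c"
proof -
  define S where "S = {w. \<exists>r. W (r,c) = Some w \<and> z < w}"
  have fS: "finite S" unfolding S_def using fin_vals[OF fin, of "\<lambda>r. (r,c)" "\<lambda>w. z < w"] by simp
  have neS: "S \<noteq> {}" using ex unfolding S_def by auto
  define w where "w = Min S"
  have wS: "w \<in> S" unfolding w_def using Min_in[OF fS neS] .
  define C where "C = {r. W (r,c) = Some w}"
  have fC: "finite C" unfolding C_def using fin_rows[OF fin] .
  have neC: "C \<noteq> {}" using wS unfolding S_def C_def by auto
  define r where "r = Min C"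
  have cC: "r \<in> C" unfolding r_def using Min_in[OF fC neC] .
  show ?thesis
  proof (rule that)
    show "W (r,c) = Some w" using cC unfolding C_def by simp
    show "z < w" using wS \<open>W (r,c) = Some w\<close> unfolding S_def by auto
    show "ins_step (ColIns W z c) = displace (W((r,c) := Some z)) w r c"
      apply (subst ins_step.simps)
      apply (simp only: ex not_True_eq_False if_False Let_def S_def[symmetric] w_def[symmetric])
      apply (simp only: C_def[symmetric] r_def[symmetric])
      done
  qed
qed

lemma colins_none: "(ins_step^^N) (ColIns W z c) = Done U d \<Longrightarrow> \<not> is_B0 z \<Longrightarrow> finite (dom W) \<Longrightarrow> d = None"
proof (induction N arbitrary: W z c)
  case 0
  then show ?case by simp
next
  case (Suc N)
  show ?case
  proof (cases "\<exists>r w. W (r,c) = Some w \<and> z < w")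
    case False
    then show ?thesis using Suc.prems(1) by (simp add: run_Suc funpow_Done del: funpow.simps)
  next
    case True
    obtain w r where w: "W (r,c) = Some w" "z < w" "ins_step (ColIns W z c) = displace (W((r,c) := Some z)) w r c"
      using colins_exists[OF Suc.prems(3) True] by blast
    have "\<not> is_B0 w" using L4[OF Suc.prems(2) w(2)] .
    then have st: "ins_step (ColIns W z c) = ColIns (W((r,c) := Some z)) w (c+1)"
      using w(3) by (simp add: displace_def)
    have r: "(ins_step^^N) (ColIns (W((r,c) := Some z)) w (c+1)) = Done U d"
      using Suc.prems(1) st by (simp only: run_Suc)
    show ?thesis
    proof -
      have "finite (dom (W((r,c) := Some z)))" using Suc.prems(3) by simp
      then show ?thesis using Suc.IH[OF r \<open>\<not> is_B0 w\<close>] by blast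
    qed
  qed
qed

lemma slide_cases:
  obtains (fin) "W (i,j+1) = None" "W (i+1,j) = None" "ins_step (Slide W (i,j)) = Done W (Some (i,j))"
  | (right) a where "W (i,j+1) = Some a" "W (i+1,j) = None \<or> (\<exists>b. W (i+1,j) = Some b \<and> (a<b \<or> (a=b \<and> \<not> is_B0 a)))"
      "ins_step (Slide W (i,j)) = Slide (W((i,j) := Some a, (i,j+1) := None)) (i,j+1)"
  | (down) b where "W (i+1,j) = Some b" "W (i,j+1) = None \<or> (\<exists>a. W (i,j+1) = Some a \<and> \<not>(a<b \<or> (a=b \<and> \<not> is_B0 a)))"
      "ins_step (Slide W (i,j)) = Slide (W((i,j) := Some b, (i+1,j) := None)) (i+1,j)"
proof (cases "W (i,j+1)")
  case None
  show ?thesis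
  proof (cases "W (i+1,j)")
    case None2: None
    then show ?thesis using None fin by simp
  next
    case (Some b)
    then show ?thesis using None down[of b] by (simp add: move_into_def)
  qed
next
  case (Some a)
  show ?thesis
  proof (cases "W (i+1,j)")
    case None2: None
    then show ?thesis using Some right[of a] by (simp add: move_into_def)
  next
    case S2: (Some b)
    show ?thesis
    proof (cases "a<b \<or> (a=b \<and> \<not> is_B0 a)")
      case True
      then show ?thesis using Some S2 right[of a] by (simp add: move_into_def)
    next
      case False
      then show ?thesis using Some S2 down[of b] by (simp add: move_into_def)
    qed
  qed
qed

fun tab_of :: "ins_state \<Rightarrow> tab" where
  "tab_of (RowIns W z r) = W" | "tab_of (ColIns W z c) = W" | "tab_of (Slide W h) = W" | "tab_of (Done W d) = W"

lemma tab_displace: "tab_of (displace W w r c) = W"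
  by (simp add: displace_def)

lemma fin_step: assumes "finite (dom (tab_of s))" shows "finite (dom (tab_of (ins_step s)))"
proof (cases s)
  case (RowIns W z r)
  show ?thesis
  proof (cases "\<exists>c w. W (r,c) = Some w \<and> z < w")
    case False
    then have "ins_step (RowIns W z r) = Done (W((r, Max ({0} \<union> {c. (r,c) \<in> dom W}) + 1) := Some z)) None"
      by (simp only: ins_step.simps False not_False_eq_True if_True)
    then show ?thesis using assms RowIns by simp
  next
    case True
    have fW: "finite (dom W)" using assms RowIns by simp
    obtain w c where "ins_step (RowIns W z r) = (if z = B0 r False \<and> w = B0 r True then Slide (W((r,c) := None)) (r,c)
         else displace (W((r,c) := Some z)) w r c)"
      using rowins_exists[OF fW True] by metis
    then show ?thesis using fW RowIns by (simp add: tab_displace)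
  qed
next
  case (ColIns W z c)
  show ?thesis
  proof (cases "\<exists>r w. W (r,c) = Some w \<and> z < w")
    case False
    then have "ins_step (ColIns W z c) = Done (W((Max ({0} \<union> {r. (r,c) \<in> dom W}) + 1, c) := Some z)) None"
      by (simp only: ins_step.simps False not_False_eq_True if_True)
    then show ?thesis using assms ColIns by simp
  next
    case True
    have fW: "finite (dom W)" using assms ColIns by simp
    obtain w r where "ins_step (ColIns W z c) = displace (W((r,c) := Some z)) w r c"
      using colins_exists[OF fW True] by metis
    then show ?thesis using fW ColIns by (simp add: tab_displace)
  qed
next
  case (Slide W h)
  obtain i j where h: "h = (i,j)" by force
  have fW: "finite (dom W)" using assms Slide by simp
  show ?thesis
    by (cases W i j rule: slide_cases) (use fW Slide h in simp_all)
next
  case (Done W d)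
  then show ?thesis using assms by simp
qed

lemma fin_run: "finite (dom (tab_of s)) \<Longrightarrow> finite (dom (tab_of ((ins_step^^N) s)))"
  by (induction N) (auto intro: fin_step)



definition SlideProp :: "tab \<Rightarrow> nat \<Rightarrow> nat \<Rightarrow> (nat \<Rightarrow> nat) \<Rightarrow> bool" where
 "SlideProp U r R e \<longleftrightarrow> r \<le> R \<and>
   (\<forall>k. r \<le> k \<longrightarrow> k < R \<longrightarrow> e k \<le> e (Suc k)) \<and>
   (\<forall>k l. r \<le> k \<longrightarrow> k \<le> R \<longrightarrow> e k \<le> l \<longrightarrow> U (k,l) \<noteq> Some (B0 k True)) \<and>
   (\<forall>k j. r \<le> k \<longrightarrow> k < R \<longrightarrow> e k = Suc j \<longrightarrow> 1 \<le> j \<longrightarrow>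
       (\<exists>a b. U (k, Suc j) = Some a \<and> U (Suc k, j) = Some b \<and> \<not> (a < b \<or> (a = b \<and> \<not> is_B0 a)))) \<and>
   U (R, e R) = None \<and>
   (\<forall>k. R < k \<longrightarrow> U (k, e R) = None) \<and>
   (\<forall>k. r \<le> k \<longrightarrow> U (k,0) = None)"

lemma slide1:
  assumes spo: "spo_tableau m n T"
  shows "(ins_step^^N) (Slide W h) = Done U (Some b) \<Longrightarrow> W h = None \<Longrightarrow> (\<forall>p. h < p \<longrightarrow> W p = T p) \<Longrightarrow>
    1 \<le> fst h \<Longrightarrow> 1 \<le> snd h \<Longrightarrow> (\<forall>k. fst h \<le> k \<longrightarrow> W (k,0) = None) \<Longrightarrow>
   \<exists>e. SlideProp U (fst h) (fst b) e \<and> snd b = e (fst b) \<and> snd h \<le> e (fst h) \<and> (\<forall>p. p < h \<longrightarrow> U p = W p)"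
proof (induction N arbitrary: W h)
  case 0
  then show ?case by simp
next
  case (Suc N)
  obtain i j where h: "h = (i,j)" by force
  have WT: "\<And>p. (i,j) < p \<Longrightarrow> W p = T p" using Suc.prems(3) h by blast
  have i1: "1 \<le> i" and j1: "1 \<le> j" using Suc.prems(4,5) h by auto
  show ?case
  proof (cases W i j rule: slide_cases)
    case fin
    have UW: "U = W" and bb: "b = (i,j)"
      using Suc.prems(1) fin(3) h by (simp_all add: run_Suc funpow_Done del: funpow.simps)
    have Tr: "T (i,l) = None" if jl: "j < l" for l
    proof (rule ccontr)
      assume "T (i,l) \<noteq> None"
      then obtain a where "T (i,l) = Some a" by auto
      then obtain a' where "T (i,j+1) = Some a'" using spo_young[OF spo, of i l a i "j+1"] i1 jl by auto
      moreover have "W (i,j+1) = T (i,j+1)" by (rule WT) (simp add: less_prod_def)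
      ultimately show False using fin(1) by simp
    qed
    have Td: "T (k,j) = None" if ik: "i < k" for k
    proof (rule ccontr)
      assume "T (k,j) \<noteq> None"
      then obtain a where "T (k,j) = Some a" by auto
      then obtain a' where "T (i+1,j) = Some a'" using spo_young[OF spo, of k j a "i+1" j] j1 ik by auto
      moreover have "W (i+1,j) = T (i+1,j)" by (rule WT) (simp add: less_prod_def)
      ultimately show False using fin(2) by simp
    qed
    have "SlideProp U i i (\<lambda>_. j)"
      unfolding SlideProp_def UW
    proof (intro conjI allI impI)
      fix k l assume "i \<le> k" "k \<le> i" "j \<le> l"
      then have k: "k = i" by simp
      show "W (k,l) \<noteq> Some (B0 k True)"
      proof (cases "l = j")
        case True then show ?thesis using Suc.prems(2) h k by simp
      next
        case False
        then have "j < l" using \<open>j \<le> l\<close> by simp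
        have "W (k,l) = T (k,l)" using k \<open>j < l\<close> by (intro WT) (simp add: less_prod_def)
        then show ?thesis using Tr[OF \<open>j < l\<close>] k by simp
      qed
    next
      show "W (i,j) = None" using Suc.prems(2) h by simp
    next
      fix k assume "i < k"
      have "W (k,j) = T (k,j)" using \<open>i < k\<close> by (intro WT) (simp add: less_prod_def)
      then show "W (k,j) = None" using Td[OF \<open>i < k\<close>] by simp
    next
      fix k assume "i \<le> k"
      then show "W (k,0) = None" using Suc.prems(6) h by simp
    qed auto
    then show ?thesis using h bb UW by auto
  next
    case (right a)
    define W' where "W' = W((i,j) := Some a, (i,j+1) := None)"
    have run: "(ins_step^^N) (Slide W' (i,j+1)) = Done U (Some b)"
      using Suc.prems(1) right(3) h unfolding W'_def by (simp only: run_Suc)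
    have p2: "W' (i,j+1) = None" unfolding W'_def by simp
    have p3: "\<forall>p. (i,j+1) < p \<longrightarrow> W' p = T p"
    proof (intro allI impI)
      fix p assume "(i,j+1) < p"
      then have "(i,j) < p" "p \<noteq> (i,j)" "p \<noteq> (i,j+1)" by (auto simp: less_prod_def)
      then show "W' p = T p" unfolding W'_def using WT by simp
    qed
    have p6: "\<forall>k. fst (i,j+1) \<le> k \<longrightarrow> W' (k,0) = None"
      using Suc.prems(6) h j1 unfolding W'_def by auto
    obtain e where e: "SlideProp U i (fst b) e" "snd b = e (fst b)" "j+1 \<le> e i"
      "\<forall>p. p < (i,j+1) \<longrightarrow> U p = W' p"
      using Suc.IH[OF run p2 p3 _ _ p6] i1 by auto
    have "\<forall>p. p < (i,j) \<longrightarrow> U p = W p"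
    proof (intro allI impI)
      fix p assume "p < (i,j)"
      then have "p < (i,j+1)" "p \<noteq> (i,j)" "p \<noteq> (i,j+1)" by (auto simp: less_prod_def)
      then show "U p = W p" using e(4)[rule_format, of p] unfolding W'_def by simp
    qed
    then show ?thesis using e h by auto
  next
    case (down b0)
    define W' where "W' = W((i,j) := Some b0, (i+1,j) := None)"
    have run: "(ins_step^^N) (Slide W' (i+1,j)) = Done U (Some b)"
      using Suc.prems(1) down(3) h unfolding W'_def by (simp only: run_Suc)
    have p2: "W' (i+1,j) = None" unfolding W'_def by simp
    have p3: "\<forall>p. (i+1,j) < p \<longrightarrow> W' p = T p"
    proof (intro allI impI)
      fix p assume "(i+1,j) < p"
      then have "(i,j) < p" "p \<noteq> (i,j)" "p \<noteq> (i+1,j)" by (auto simp: less_prod_def)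
      then show "W' p = T p" unfolding W'_def using WT by simp
    qed
    have p6: "\<forall>k. fst (i+1,j) \<le> k \<longrightarrow> W' (k,0) = None"
      using Suc.prems(6) h j1 unfolding W'_def by auto
    obtain e' where e': "SlideProp U (i+1) (fst b) e'" "snd b = e' (fst b)" "j \<le> e' (i+1)"
      "\<forall>p. p < (i+1,j) \<longrightarrow> U p = W' p"
      using Suc.IH[OF run p2 p3 _ _ p6] j1 by auto
    define R where "R = fst b"
    define e where "e = e'(i := j)"
    have b0T: "T (i+1,j) = Some b0"
      using down(1) WT[of "(i+1,j)"] by (simp add: less_prod_def)
    have b0lb: "B0 i True < b0" using spo_row_lb[OF spo] b0T by simp
    have right_ge: "b0 \<le> a" if "T (i,j+1) = Some a" for a
    proof -
      have "W (i,j+1) = Some a" using that WT[of "(i,j+1)"] by (simp add: less_prod_def)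
      then show ?thesis using down(2) by auto
    qed
    have iR: "i < R" using e' unfolding SlideProp_def R_def by simp
    have UW: "U p = W' p" if "p < (i+1,j)" for p using e'(4)[rule_format, of p] that by blast
    have sp': "SlideProp U (i+1) R e'" using e'(1) R_def by simp
    have "SlideProp U i R e"
      unfolding SlideProp_def
    proof (intro conjI allI impI)
      show "i \<le> R" using iR by simp
    next
      fix k assume "i \<le> k" "k < R"
      show "e k \<le> e (Suc k)"
      proof (cases "k = i")
        case True then show ?thesis using e'(3) unfolding e_def by simp
      next
        case False then show ?thesis using sp' \<open>i \<le> k\<close> \<open>k < R\<close> unfolding SlideProp_def e_def by simp
      qed
    next
      fix k l assume kl: "i \<le> k" "k \<le> R" "e k \<le> l"
      show "U (k,l) \<noteq> Some (B0 k True)"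
      proof (cases "k = i")
        case False then show ?thesis using sp' kl unfolding SlideProp_def e_def by simp
      next
        case True
        have Ul: "U (i,l) = W' (i,l)" by (rule UW) (simp add: less_prod_def)
        show ?thesis
        proof (cases "l = j")
          case True
          then show ?thesis using Ul \<open>k = i\<close> b0lb unfolding W'_def by auto
        next
          case False
          then have jl: "j < l" using kl \<open>k = i\<close> unfolding e_def by simp
          have "W' (i,l) = T (i,l)" unfolding W'_def using jl WT[of "(i,l)"] by (simp add: less_prod_def)
          show ?thesis
          proof
            assume as: "U (k,l) = Some (B0 k True)"
            then have Tl: "T (i,l) = Some (B0 i True)" using Ul \<open>W' (i,l) = T (i,l)\<close> \<open>k = i\<close> by simp
            then obtain a where a: "T (i,j+1) = Some a" using spo_young[OF spo Tl, of i "j+1"] i1 jl by auto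
            have "a \<le> B0 i True" using spo_row_mono'[OF spo a Tl] jl by simp
            then show False using right_ge[OF a] b0lb by simp
          qed
        qed
      qed
    next
      fix k j' assume kj: "i \<le> k" "k < R" "e k = Suc j'" "1 \<le> j'"
      show "\<exists>a b. U (k, Suc j') = Some a \<and> U (Suc k, j') = Some b \<and> \<not> (a < b \<or> (a = b \<and> \<not> is_B0 a))"
      proof (cases "k = i")
        case False then show ?thesis using sp' kj unfolding SlideProp_def e_def by simp
      next
        case True
        then have jj: "j = Suc j'" using kj unfolding e_def by simp
        have U1: "U (i, Suc j') = Some b0" using UW[of "(i,j)"] jj unfolding W'_def by (simp add: less_prod_def)
        obtain b' where b': "T (i+1,j') = Some b'" using spo_young[OF spo b0T, of "i+1" j'] kj jj by auto
        have U2: "U (Suc i, j') = Some b'"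
          using UW[of "(i+1,j')"] WT[of "(i+1,j')"] b' jj unfolding W'_def by (simp add: less_prod_def)
        have "b' \<le> b0 \<and> (b' = b0 \<longrightarrow> is_B0 b')" using spo_row_adj[OF spo b'] b0T jj by simp
        then show ?thesis using U1 U2 True by auto
      qed
    next
      show "U (R, e R) = None" using sp' iR unfolding SlideProp_def e_def by simp
    next
      fix k assume "R < k"
      then show "U (k, e R) = None" using sp' iR unfolding SlideProp_def e_def by simp
    next
      fix k assume "i \<le> k"
      show "U (k,0) = None"
      proof (cases "k = i")
        case False then show ?thesis using sp' \<open>i \<le> k\<close> unfolding SlideProp_def by simp
      next
        case True
        have "U (i,0) = W' (i,0)" by (rule UW) (simp add: less_prod_def)
        then show ?thesis using True Suc.prems(6) h j1 unfolding W'_def by simp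
      qed
    qed
    moreover have "\<forall>p. p < (i,j) \<longrightarrow> U p = W p"
    proof (intro allI impI)
      fix p assume "p < (i,j)"
      then have "p < (i+1,j)" "p \<noteq> (i,j)" "p \<noteq> (i+1,j)" by (auto simp: less_prod_def)
      then show "U p = W p" using UW[of p] unfolding W'_def by simp
    qed
    ultimately show ?thesis using h e'(2) iR unfolding R_def e_def by auto
  qed
qed



definition RowProp :: "tab \<Rightarrow> nat \<Rightarrow> ent \<Rightarrow> ent \<Rightarrow> bool" where
  "RowProp U k y y' \<longleftrightarrow> (\<forall>j v. U (k,j) = Some v \<longrightarrow> y < v \<longrightarrow> y' \<le> v) \<and> y < y' \<and>
      \<not> (y = B0 k False \<and> y' = B0 k True) \<and> B0 k False \<le> y"

lemma rowphase1:
  assumes spo: "spo_tableau m n T"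
  shows "(ins_step^^N) (RowIns W z k) = Done U (Some b) \<Longrightarrow> (\<forall>p. k \<le> fst p \<longrightarrow> W p = T p) \<Longrightarrow>
    B0 k False \<le> z \<Longrightarrow> 1 \<le> k \<Longrightarrow> finite (dom W) \<Longrightarrow>
   \<exists>r ys e. k \<le> r \<and> ys k = z \<and> (\<forall>p. fst p < k \<longrightarrow> U p = W p) \<and>
     (\<forall>k'. k \<le> k' \<longrightarrow> k' < r \<longrightarrow> RowProp U k' (ys k') (ys (Suc k'))) \<and>
     SlideProp U r (fst b) e \<and> snd b = e (fst b)"
proof (induction N arbitrary: W z k)
  case 0
  then show ?case by simp
next
  case (Suc N)
  have WT: "\<And>p. k \<le> fst p \<Longrightarrow> W p = T p" using Suc.prems(2) by blast
  show ?case
  proof (cases "\<exists>c w. W (k,c) = Some w \<and> z < w")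
    case False
    then obtain U' where st: "ins_step (RowIns W z k) = Done U' None" by (meson rowins_none)
    have "(ins_step^^N) (Done U' None) = Done U (Some b)" using Suc.prems(1) st by (simp only: run_Suc)
    then show ?thesis by (simp only: funpow_Done) simp
  next
    case True
    obtain w c where wc: "W (k,c) = Some w" "z < w" "\<And>c' w'. W (k,c') = Some w' \<Longrightarrow> z < w' \<Longrightarrow> w \<le> w'"
      "ins_step (RowIns W z k) = (if z = B0 k False \<and> w = B0 k True then Slide (W((k,c) := None)) (k,c)
         else displace (W((k,c) := Some z)) w k c)"
      using rowins_exists[OF Suc.prems(5) True] by metis
    have Tkc: "T (k,c) = Some w" using wc(1) WT[of "(k,c)"] by simp
    have c1: "1 \<le> c" using spo_dom[OF spo Tkc] by simp
    show ?thesis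
    proof (cases "z = B0 k False \<and> w = B0 k True")
      case True
      define W' where "W' = W((k,c) := None)"
      have st: "ins_step (RowIns W z k) = Slide W' (k,c)"
        unfolding wc(4) W'_def using True by (rule if_P)
      have run: "(ins_step^^N) (Slide W' (k,c)) = Done U (Some b)"
        using Suc.prems(1) st by (simp only: run_Suc)
      have p3: "\<forall>p. (k,c) < p \<longrightarrow> W' p = T p"
      proof (intro allI impI)
        fix p assume "(k,c) < p"
        then have "k \<le> fst p" "p \<noteq> (k,c)" by (auto simp: less_prod_def)
        then show "W' p = T p" unfolding W'_def using WT by simp
      qed
      have p6: "\<forall>k'. fst (k,c) \<le> k' \<longrightarrow> W' (k',0) = None"
      proof (intro allI impI)
        fix k' assume "fst (k,c) \<le> k'"
        then have "W (k',0) = T (k',0)" using WT by simp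
        moreover have "T (k',0) = None" using spo_dom[OF spo, of k' 0] by (cases "T (k',0)") auto
        ultimately show "W' (k',0) = None" unfolding W'_def using c1 by simp
      qed
      obtain e where e: "SlideProp U k (fst b) e" "snd b = e (fst b)" "\<forall>p. p < (k,c) \<longrightarrow> U p = W' p"
        using slide1[OF spo run _ p3 _ _ p6] Suc.prems(4) c1 unfolding W'_def by auto
      have "\<forall>p. fst p < k \<longrightarrow> U p = W p"
      proof (intro allI impI)
        fix p :: "nat \<times> nat" assume "fst p < k"
        then have "p < (k,c)" "p \<noteq> (k,c)" by (cases p; auto simp: less_prod_def)+
        then show "U p = W p" using e(3)[rule_format, of p] unfolding W'_def by simp
      qed
      then show ?thesis using e(1,2) by (intro exI[of _ k] exI[of _ "\<lambda>_. z"] exI[of _ e]) auto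
    next
      case False
      show ?thesis
      proof (cases "is_B0 w")
        case False2: False
        have st: "ins_step (RowIns W z k) = ColIns (W((k,c) := Some z)) w (c+1)"
          unfolding wc(4) if_not_P[OF False] displace_def if_not_P[OF False2] ..
        have run: "(ins_step^^N) (ColIns (W((k,c) := Some z)) w (c+1)) = Done U (Some b)"
          using Suc.prems(1) st by (simp only: run_Suc)
        have "finite (dom (W((k,c) := Some z)))" using Suc.prems(5) by simp
        from colins_none[OF run False2 this] show ?thesis by simp
      next
        case True2: True
        define W' where "W' = W((k,c) := Some z)"
        have st: "ins_step (RowIns W z k) = RowIns W' w (k+1)"
          unfolding wc(4) if_not_P[OF False] displace_def if_P[OF True2] W'_def ..
        have run: "(ins_step^^N) (RowIns W' w (k+1)) = Done U (Some b)"
          using Suc.prems(1) st by (simp only: run_Suc)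
        have p2: "\<forall>p. k+1 \<le> fst p \<longrightarrow> W' p = T p" unfolding W'_def using WT by auto
        have p3: "B0 (k+1) False \<le> w" using L2[OF Suc.prems(3) wc(2) True2 False] by simp
        have p5: "finite (dom W')" using Suc.prems(5) unfolding W'_def by simp
        obtain r ys e where IH: "k+1 \<le> r" "ys (k+1) = w" "\<forall>p. fst p < k+1 \<longrightarrow> U p = W' p"
          "\<forall>k'. k+1 \<le> k' \<longrightarrow> k' < r \<longrightarrow> RowProp U k' (ys k') (ys (Suc k'))"
          "SlideProp U r (fst b) e" "snd b = e (fst b)"
          using Suc.IH[OF run p2 p3 _ p5] by auto
        define ys' where "ys' = ys(k := z)"
        have rp: "RowProp U k z w"
          unfolding RowProp_def
        proof (intro conjI allI impI)
          fix j v assume "U (k,j) = Some v" "z < v"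
          then have "W' (k,j) = Some v" using IH(3)[rule_format, of "(k,j)"] by simp
          then show "w \<le> v"
          proof (cases "j = c")
            case True then show ?thesis using \<open>W' (k,j) = Some v\<close> \<open>z < v\<close> unfolding W'_def by simp
          next
            case False
            then have "W (k,j) = Some v" using \<open>W' (k,j) = Some v\<close> unfolding W'_def by simp
            then show ?thesis using wc(3) \<open>z < v\<close> by blast
          qed
        qed (use wc(2) False Suc.prems(3) in auto)
        have "\<forall>k'. k \<le> k' \<longrightarrow> k' < r \<longrightarrow> RowProp U k' (ys' k') (ys' (Suc k'))"
        proof (intro allI impI)
          fix k' assume "k \<le> k'" "k' < r"
          show "RowProp U k' (ys' k') (ys' (Suc k'))"
          proof (cases "k' = k")
            case True then show ?thesis using rp IH(2) unfolding ys'_def by simp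
          next
            case False then show ?thesis using IH(4) \<open>k \<le> k'\<close> \<open>k' < r\<close> unfolding ys'_def by simp
          qed
        qed
        moreover have "\<forall>p. fst p < k \<longrightarrow> U p = W p"
        proof (intro allI impI)
          fix p :: "nat \<times> nat" assume "fst p < k"
          then show "U p = W p" using IH(3)[rule_format, of p] unfolding W'_def by (cases p) auto
        qed
        ultimately show ?thesis using IH(1,5,6) unfolding ys'_def
          by (intro exI[of _ r] exI[of _ ys'] exI[of _ e]) (auto simp: ys'_def)
      qed
    qed
  qed
qed



lemma e_mono: assumes "SlideProp U r R e" "r \<le> k" "k \<le> k'" "k' \<le> R" shows "e k \<le> e k'"
  using assms(3,4)
proof (induction k' rule: dec_induct)
  case base then show ?case by simp
next
  case (step q)
  have "e q \<le> e (Suc q)" using assms(1,2) step unfolding SlideProp_def by simp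
  then show ?case using step by simp
qed

lemma slide2:
  "(ins_step^^N) (Slide W h) = Done V (Some b2) \<Longrightarrow> (\<forall>p. h < p \<longrightarrow> W p = U p) \<Longrightarrow> U h \<noteq> None \<Longrightarrow>
   r \<le> fst h \<Longrightarrow> (fst h \<le> R \<longrightarrow> snd h < e (fst h)) \<Longrightarrow> 1 \<le> snd h \<Longrightarrow> SlideProp U r R e \<Longrightarrow> snd b2 \<noteq> e R"
proof (induction N arbitrary: W h)
  case 0
  then show ?case by simp
next
  case (Suc N)
  obtain i j where h: "h = (i,j)" by force
  have WU: "\<And>p. (i,j) < p \<Longrightarrow> W p = U p" using Suc.prems(2) h by blast
  have sp: "SlideProp U r R e" by fact
  show ?case
  proof (cases W i j rule: slide_cases)
    case fin
    have "(ins_step^^N) (Done W (Some (i,j))) = Done V (Some b2)"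
      using Suc.prems(1) fin(3) h by (simp only: run_Suc)
    then have bb: "b2 = (i,j)" by (simp only: funpow_Done) simp
    show ?thesis
    proof (cases "i \<le> R")
      case True
      then have "j < e i" using Suc.prems(5) h by simp
      moreover have "e i \<le> e R" using e_mono[OF sp _ _ order_refl, of i] Suc.prems(4) h True by simp
      ultimately show ?thesis using bb by simp
    next
      case False
      then have "U (i, e R) = None" using sp unfolding SlideProp_def by simp
      then show ?thesis using bb Suc.prems(3) h by auto
    qed
  next
    case (right a)
    define W' where "W' = W((i,j) := Some a, (i,j+1) := None)"
    have run: "(ins_step^^N) (Slide W' (i,j+1)) = Done V (Some b2)"
      using Suc.prems(1) right(3) h unfolding W'_def by (simp only: run_Suc)
    have p2: "\<forall>p. (i,j+1) < p \<longrightarrow> W' p = U p"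
    proof (intro allI impI)
      fix p assume "(i,j+1) < p"
      then have "(i,j) < p" "p \<noteq> (i,j)" "p \<noteq> (i,j+1)" by (auto simp: less_prod_def)
      then show "W' p = U p" unfolding W'_def using WU by simp
    qed
    have Ua: "U (i,j+1) = Some a" using right(1) WU[of "(i,j+1)"] by (simp add: less_prod_def)
    have p5: "i \<le> R \<longrightarrow> j+1 < e i"
    proof
      assume iR: "i \<le> R"
      then have "j < e i" using Suc.prems(5) h by simp
      show "j+1 < e i"
      proof (rule ccontr)
        assume "\<not> j+1 < e i"
        then have ej: "e i = Suc j" using \<open>j < e i\<close> by simp
        show False
        proof (cases "i = R")
          case True
          then show False using sp Ua ej unfolding SlideProp_def by simp
        next
          case False
          then have "i < R" using iR by simp
          then obtain a' b' where ab: "U (i, Suc j) = Some a'" "U (Suc i, j) = Some b'" "\<not> (a' < b' \<or> (a' = b' \<and> \<not> is_B0 a'))"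
            using sp ej Suc.prems(4,6) h unfolding SlideProp_def by force
          have "W (i+1,j) = Some b'" using ab(2) WU[of "(i+1,j)"] by (simp add: less_prod_def)
          then show False using right(2) ab Ua by auto
        qed
      qed
    qed
    show ?thesis
      using Suc.IH[OF run p2] Ua p5 Suc.prems(4) h sp by simp
  next
    case (down b)
    define W' where "W' = W((i,j) := Some b, (i+1,j) := None)"
    have run: "(ins_step^^N) (Slide W' (i+1,j)) = Done V (Some b2)"
      using Suc.prems(1) down(3) h unfolding W'_def by (simp only: run_Suc)
    have p2: "\<forall>p. (i+1,j) < p \<longrightarrow> W' p = U p"
    proof (intro allI impI)
      fix p assume "(i+1,j) < p"
      then have "(i,j) < p" "p \<noteq> (i,j)" "p \<noteq> (i+1,j)" by (auto simp: less_prod_def)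
      then show "W' p = U p" unfolding W'_def using WU by simp
    qed
    have Ub: "U (i+1,j) = Some b" using down(1) WU[of "(i+1,j)"] by (simp add: less_prod_def)
    have p5: "i+1 \<le> R \<longrightarrow> j < e (i+1)"
    proof
      assume "i+1 \<le> R"
      then have "j < e i" using Suc.prems(5) h by simp
      moreover have "e i \<le> e (Suc i)" using sp \<open>i+1 \<le> R\<close> Suc.prems(4) h unfolding SlideProp_def by simp
      ultimately show "j < e (i+1)" by simp
    qed
    show ?thesis
      using Suc.IH[OF run p2] Ub p5 Suc.prems(4,6) h sp by simp
  qed
qed



lemma rowphase2:
  assumes fU: "finite (dom U)" and sp: "SlideProp U r R e"
    and rp: "\<forall>k'. 1 \<le> k' \<longrightarrow> k' < r \<longrightarrow> RowProp U k' (ys k') (ys (Suc k'))"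
  shows "(ins_step^^N) (RowIns W z k) = Done V (Some b2) \<Longrightarrow> (\<forall>p. k \<le> fst p \<longrightarrow> W p = U p) \<Longrightarrow>
    1 \<le> k \<Longrightarrow> (k < r \<longrightarrow> ys k \<le> z) \<Longrightarrow> finite (dom W) \<Longrightarrow> snd b2 \<noteq> e R"
proof (induction N arbitrary: W z k)
  case 0
  then show ?case by simp
next
  case (Suc N)
  have WU: "\<And>p. k \<le> fst p \<Longrightarrow> W p = U p" using Suc.prems(2) by blast
  show ?case
  proof (cases "\<exists>c w. W (k,c) = Some w \<and> z < w")
    case False
    then obtain U' where st: "ins_step (RowIns W z k) = Done U' None" by (meson rowins_none)
    have "(ins_step^^N) (Done U' None) = Done V (Some b2)" using Suc.prems(1) st by (simp only: run_Suc)
    then show ?thesis by (simp only: funpow_Done) simp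
  next
    case True
    obtain w c where wc: "W (k,c) = Some w" "z < w" "\<And>c' w'. W (k,c') = Some w' \<Longrightarrow> z < w' \<Longrightarrow> w \<le> w'"
      "ins_step (RowIns W z k) = (if z = B0 k False \<and> w = B0 k True then Slide (W((k,c) := None)) (k,c)
         else displace (W((k,c) := Some z)) w k c)"
      using rowins_exists[OF Suc.prems(5) True] by metis
    have Ukc: "U (k,c) = Some w" using wc(1) WU[of "(k,c)"] by simp
    show ?thesis
    proof (cases "z = B0 k False \<and> w = B0 k True")
      case True
      show ?thesis
      proof (cases "k < r")
        case True2: True
        have R: "RowProp U k (ys k) (ys (Suc k))" using rp Suc.prems(3) True2 by blast
        have y: "ys k = z" using R Suc.prems(4) True2 True unfolding RowProp_def by auto
        have "ys (Suc k) \<le> w" using R Ukc y wc(2) unfolding RowProp_def by blast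
        moreover have "B0 k False < ys (Suc k)" using R y True unfolding RowProp_def by simp
        ultimately have "ys (Suc k) = B0 k True" using L1 True by simp
        then show ?thesis using R y True unfolding RowProp_def by simp
      next
        case False2: False
        define W' where "W' = W((k,c) := None)"
        have st: "ins_step (RowIns W z k) = Slide W' (k,c)"
          unfolding wc(4) W'_def using True by (rule if_P)
        have run: "(ins_step^^N) (Slide W' (k,c)) = Done V (Some b2)"
          using Suc.prems(1) st by (simp only: run_Suc)
        have p2: "\<forall>p. (k,c) < p \<longrightarrow> W' p = U p"
        proof (intro allI impI)
          fix p assume "(k,c) < p"
          then have "k \<le> fst p" "p \<noteq> (k,c)" by (auto simp: less_prod_def)
          then show "W' p = U p" unfolding W'_def using WU by simp
        qed
        have p5: "k \<le> R \<longrightarrow> c < e k"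
        proof
          assume "k \<le> R"
          show "c < e k"
          proof (rule ccontr)
            assume "\<not> c < e k"
            then have "U (k,c) \<noteq> Some (B0 k True)" using sp False2 \<open>k \<le> R\<close> unfolding SlideProp_def by simp
            then show False using Ukc True by simp
          qed
        qed
        have p6: "1 \<le> c"
        proof (rule ccontr)
          assume "\<not> 1 \<le> c"
          then have "c = 0" by simp
          then have "U (k,c) = None" using sp False2 unfolding SlideProp_def by simp
          then show False using Ukc by simp
        qed
        show ?thesis using slide2[OF run p2 _ _ _ _ sp] Ukc False2 p5 p6 by simp
      qed
    next
      case False
      show ?thesis
      proof (cases "is_B0 w")
        case False2: False
        have st: "ins_step (RowIns W z k) = ColIns (W((k,c) := Some z)) w (c+1)"
          unfolding wc(4) if_not_P[OF False] displace_def if_not_P[OF False2] ..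
        have run: "(ins_step^^N) (ColIns (W((k,c) := Some z)) w (c+1)) = Done V (Some b2)"
          using Suc.prems(1) st by (simp only: run_Suc)
        have "finite (dom (W((k,c) := Some z)))" using Suc.prems(5) by simp
        from colins_none[OF run False2 this] show ?thesis by simp
      next
        case True2: True
        define W' where "W' = W((k,c) := Some z)"
        have st: "ins_step (RowIns W z k) = RowIns W' w (k+1)"
          unfolding wc(4) if_not_P[OF False] displace_def if_P[OF True2] W'_def ..
        have run: "(ins_step^^N) (RowIns W' w (k+1)) = Done V (Some b2)"
          using Suc.prems(1) st by (simp only: run_Suc)
        have p2: "\<forall>p. k+1 \<le> fst p \<longrightarrow> W' p = U p" unfolding W'_def using WU by auto
        have p4: "k+1 < r \<longrightarrow> ys (k+1) \<le> w"
        proof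
          assume "k+1 < r"
          then have R: "RowProp U k (ys k) (ys (Suc k))" using rp Suc.prems(3) by simp
          have "ys k < w" using Suc.prems(4) \<open>k+1 < r\<close> wc(2) by simp
          then show "ys (k+1) \<le> w" using R Ukc unfolding RowProp_def by simp
        qed
        have p5: "finite (dom W')" using Suc.prems(5) unfolding W'_def by simp
        show ?thesis using Suc.IH[OF run p2 _ p4 p5] by simp
      qed
    qed
  qed
qed

theorem mainTheorem6:
  fixes m n :: nat and T U V :: tab and x1 x2 :: ent and b1 b2 :: "nat \<times> nat"
  assumes "0 < m" and "0 < n"
    and "spo_tableau m n T"
    and "is_B0 x1" and "in_B m n x1" and "is_B0 x2" and "in_B m n x2"
    and "x1 \<le> x2"
    and "spo_row_insert T x1 U (Some b1)"
    and "spo_row_insert U x2 V (Some b2)"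
  shows "snd b2 \<noteq> snd b1"
proof -
  note spo = assms(3)
  obtain N1 where r1: "(ins_step^^N1) (RowIns T x1 1) = Done U (Some b1)"
    using assms(9) unfolding spo_row_insert_def by blast
  obtain N2 where r2: "(ins_step^^N2) (RowIns U x2 1) = Done V (Some b2)"
    using assms(10) unfolding spo_row_insert_def by blast
  have x1: "B0 1 False \<le> x1" using assms(4,5)
    by (cases x1) (auto simp: ent_le_iff less_eq_prod_def)
  have fT: "finite (dom T)" using spo_fin[OF spo] .
  obtain r ys e where A: "1 \<le> r" "ys 1 = x1"
     "\<forall>k'. 1 \<le> k' \<longrightarrow> k' < r \<longrightarrow> RowProp U k' (ys k') (ys (Suc k'))"
     "SlideProp U r (fst b1) e" "snd b1 = e (fst b1)"
    using rowphase1[OF spo r1 _ x1 _ fT] by auto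
  have "finite (dom (tab_of ((ins_step^^N1) (RowIns T x1 1))))" using fin_run fT by simp
  then have fU: "finite (dom U)" using r1 by simp
  have "snd b2 \<noteq> e (fst b1)"
    using rowphase2[OF fU A(4) A(3) r2 _ _ _ fU] A(2) assms(8) by simp
  then show ?thesis using A(5) by simp
qed


end
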